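(* Let $\mathcal{C}$ be an $(n,k,d)$ linear MDS code over a finite field $\mathbb{F}_q$ with $d \ge 2$. Then $$\frac{1}{d-1}\binom{n}{d-2} \le \rho(\mathcal{C}) \le \binom{n}{d-2}.$$
   Context: An $(n,k,d)$ linear MDS code is a linear code over $\mathbb{F}_q$ of length $n$, dimension $k$ and minimum Hamming distance $d = n-k+1$. A parity-check matrix for $\mathcal{C}$ is any matrix (possibly with linearly dependent rows) whose rows span $\mathcal{C}^\perp$. For a parity-check matrix $H$, the stopping distance $s(H)$ is the largest integer such that for every set of $s(H)-1$ or fewer columns of $H$, the projection of $H$ onto those columns contains at least one row with exactly one nonzero entry. The stopping redundancy $\rho(\mathcal{C})$ is the smallest number of rows of a parity-check matrix $H$ for $\mathcal{C}$ with $s(H) = d$. *)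

theory Defs
  imports "HOL-Analysis.Analysis"
begin

text \<open>Codewords of length n over a field are vectors of type 'a^'n, n = CARD('n).
  A parity-check matrix is a list of rows (repetitions / dependent rows allowed).\<close>

definition hamming_weight :: "('a::zero)^'n \<Rightarrow> nat" where
  "hamming_weight x = card {i. x $ i \<noteq> 0}"

definition min_distance :: "(('a::field)^'n) set \<Rightarrow> nat" where
  "min_distance C = Inf {hamming_weight c | c. c \<in> C \<and> c \<noteq> 0}"

definition dual_code :: "(('a::field)^'n) set \<Rightarrow> ('a^'n) set" where
  "dual_code C = {x. \<forall>c\<in>C. (\<Sum>i\<in>UNIV. x $ i * c $ i) = 0}"

definition is_parity_check_matrix :: "(('a::field)^'n) set \<Rightarrow> ('a^'n) list \<Rightarrow> bool" where
  "is_parity_check_matrix C H \<longleftrightarrow> vec.span (set H) = dual_code C"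

definition stopping_distance :: "(('a::field)^'n) list \<Rightarrow> nat" where
  "stopping_distance H = (GREATEST s. \<forall>S::'n set. S \<noteq> {} \<and> card S \<le> s - 1 \<longrightarrow>
       (\<exists>h\<in>set H. card {i\<in>S. h $ i \<noteq> 0} = 1))"

definition stopping_redundancy :: "(('a::field)^'n) set \<Rightarrow> nat" where
  "stopping_redundancy C = (LEAST r. \<exists>H. length H = r \<and> is_parity_check_matrix C H
       \<and> stopping_distance H = min_distance C)"

definition is_linear_MDS_code :: "(('a::field)^'n) set \<Rightarrow> nat \<Rightarrow> nat \<Rightarrow> nat \<Rightarrow> bool" where
  "is_linear_MDS_code C n k d \<longleftrightarrow> vec.subspace C \<and> n = CARD('n) \<and> k = vec.dim C
     \<and> d = min_distance C \<and> d = n - k + 1"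

end

theory Submission
  imports Defs
begin

definition proj :: "'n set \<Rightarrow> ('a::field)^'n \<Rightarrow> 'a^'n" where
  "proj U x = (\<chi> i. if i \<in> U then x $ i else 0)"

definition Vsub :: "'n set \<Rightarrow> (('a::field)^'n) set" where
  "Vsub U = {x. \<forall>i. i \<notin> U \<longrightarrow> x $ i = 0}"

lemma linear_proj: "Vector_Spaces.linear (*s) (*s) (proj U :: ('a::field)^'n \<Rightarrow> _)"
  unfolding Vector_Spaces.linear_iff by (auto simp: proj_def vec_eq_iff vec.vector_space_axioms)

lemma subspace_Vsub: "vec.subspace (Vsub U :: (('a::field)^'n) set)"
  unfolding vec.subspace_def Vsub_def by auto

lemma subspace_dual: "vec.subspace (dual_code C :: (('a::field)^'n) set)"
proof -
  have "(\<Sum>i\<in>UNIV. c * x $ i * y $ i) = c * (\<Sum>i\<in>UNIV. x $ i * y $ i)" for c :: 'a and x y :: "'a^'n"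
    by (simp add: sum_distrib_left mult.assoc)
  then show ?thesis unfolding vec.subspace_def dual_code_def
    by (auto simp: distrib_right sum.distrib)
qed

lemma dim_Vsub_le: "vec.dim (Vsub U :: (('a::field)^'n) set) \<le> card U"
proof -
  have "Vsub U \<subseteq> vec.span ((\<lambda>i. axis i (1::'a)) ` U)"
  proof
    fix x :: "'a^'n" assume x: "x \<in> Vsub U"
    have "x = (\<Sum>i\<in>U. x $ i *s axis i 1)"
      using x by (auto simp: vec_eq_iff sum_component axis_def Vsub_def
          if_distrib[of "\<lambda>t. _ * t"] cong: if_cong)
    also have "\<dots> \<in> vec.span ((\<lambda>i. axis i (1::'a)) ` U)"
      by (intro vec.span_sum vec.span_scale vec.span_base) auto
    finally show "x \<in> vec.span ((\<lambda>i. axis i (1::'a)) ` U)" .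
  qed
  then have "vec.dim (Vsub U :: (('a::field)^'n) set) \<le> card ((\<lambda>i. axis i (1::'a)) ` U)"
    by (intro vec.dim_le_card) auto
  also have "\<dots> \<le> card U" by (rule card_image_le) auto
  finally show ?thesis .
qed

lemma extend_set:
  assumes "finite A" "Z \<subseteq> A" "card Z \<le> m" "m \<le> card A"
  shows "\<exists>T. Z \<subseteq> T \<and> T \<subseteq> A \<and> card T = m"
proof -
  have fZ: "finite Z" using assms(1,2) finite_subset by blast
  have "card (A - Z) = card A - card Z" using assms(1,2) fZ by (simp add: card_Diff_subset)
  then have "m - card Z \<le> card (A - Z)" using assms by linarith
  then obtain B where B: "B \<subseteq> A - Z" "card B = m - card Z" "finite B"
    by (rule obtain_subset_with_card_n)
  have "card (Z \<union> B) = card Z + card B" using B fZ by (intro card_Un_disjoint) auto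
  then show ?thesis using B assms(2,3) by (intro exI[of _ "Z \<union> B"]) auto
qed

definition SP :: "(('a::field)^'n) list \<Rightarrow> nat \<Rightarrow> bool" where
  "SP H s = (\<forall>S::'n set. S \<noteq> {} \<and> card S \<le> s - 1 \<longrightarrow>
       (\<exists>h\<in>set H. card {i\<in>S. h $ i \<noteq> 0} = 1))"

lemma sd_SP: "stopping_distance H = (GREATEST s. SP H s)"
  unfolding stopping_distance_def SP_def ..

lemma SP_mono: fixes H :: "(('a::field)^'n) list"
  assumes "SP H s" "t \<le> s" shows "SP H t"
  unfolding SP_def
proof (intro allI impI)
  fix S :: "'n set" assume a: "S \<noteq> {} \<and> card S \<le> t - 1"
  then have "S \<noteq> {} \<and> card S \<le> s - 1" using assms(2) by linarith
  then show "\<exists>h\<in>set H. card {i\<in>S. h $ i \<noteq> 0} = 1" using assms(1) unfolding SP_def by blast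
qed

lemma SP_0: fixes H :: "(('a::field)^'n) list" shows "SP H 0"
  unfolding SP_def
proof (intro allI impI)
  fix S :: "'n set" assume a: "S \<noteq> {} \<and> card S \<le> 0 - 1"
  then have "card S = 0" by simp
  then have "S = {}" by (simp add: card_0_eq)
  then show "\<exists>h\<in>set H. card {i\<in>S. h $ i \<noteq> 0} = 1" using a by blast
qed

lemma SP_sd: "SP H (stopping_distance H)"
proof (cases "\<exists>b. \<forall>s. SP H s \<longrightarrow> s \<le> b")
  case True
  then obtain b where b0: "\<forall>s. SP H s \<longrightarrow> s \<le> b" by blast
  have b: "\<And>y. SP H y \<Longrightarrow> y \<le> b" using b0 by blast
  show ?thesis unfolding sd_SP by (rule GreatestI_nat[where k=0 and P="SP H", OF SP_0 b])
next
  case False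
  have "SP H s" for s
  proof -
    from False obtain s' where "SP H s'" "\<not> s' \<le> s" by blast
    then show ?thesis using SP_mono[of H s' s] by simp
  qed
  then show ?thesis by blast
qed

lemma sd_eq: assumes a1: "SP H s" and a2: "\<not> SP H (s + 1)" shows "stopping_distance H = s"
  unfolding sd_SP
proof (rule Greatest_equality)
  show "SP H s" by (rule a1)
  fix y assume a3: "SP H y"
  show "y \<le> s"
  proof (rule ccontr)
    assume "\<not> y \<le> s"
    then have "s + 1 \<le> y" by simp
    then have "SP H (s + 1)" by (rule SP_mono[OF a3])
    then show False using a2 by contradiction
  qed
qed

lemma sd_all: assumes "\<And>s. SP H s" shows "stopping_distance H = (THE x::nat. False)"
proof -
  have "(\<lambda>x::nat. SP H x \<and> (\<forall>y. SP H y \<longrightarrow> y \<le> x)) = (\<lambda>x. False)"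
  proof (rule ext)
    fix x :: nat
    have "\<not> (\<forall>y. SP H y \<longrightarrow> y \<le> x)"
    proof
      assume "\<forall>y. SP H y \<longrightarrow> y \<le> x"
      then have "Suc x \<le> x" using assms by simp
      then show False by simp
    qed
    then show "(SP H x \<and> (\<forall>y. SP H y \<longrightarrow> y \<le> x)) = False" by simp
  qed
  then show ?thesis unfolding sd_SP Greatest_def by simp
qed

lemma inf_empty: "Inf ({}::nat set) = (THE x::nat. False)"
  unfolding Inf_nat_def Least_def by simp

lemma arith_aux:
  fixes L m n :: nat
  assumes a: "n choose Suc m \<le> L * (n - m)" and mn: "m < n"
  shows "n choose m \<le> L * Suc m"
proof -
  have e: "(n - m) * (n choose m) = Suc m * (n choose Suc m)"
    using binomial_absorb_comp[of n m] binomial_absorption[of m n] by linarith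
  have "Suc m * (n choose Suc m) \<le> Suc m * (L * (n - m))" using a by (rule mult_le_mono2)
  also have "Suc m * (L * (n - m)) = (n - m) * (L * Suc m)"
    by (metis mult.commute mult.left_commute)
  finally have "(n - m) * (n choose m) \<le> (n - m) * (L * Suc m)" unfolding e .
  moreover have "0 < n - m" using mn by simp
  ultimately show ?thesis by simp
qed

context
  fixes C :: "(('a::field)^'n) set" and n k d :: nat
  assumes mds: "is_linear_MDS_code C n k d" and d2: "d \<ge> 2"
begin

lemma subC: "vec.subspace C" and nN: "n = CARD('n)" and kdim: "k = vec.dim C"
  and dmin: "d = min_distance C" and dnk: "d = n - k + 1"
  using mds unfolding is_linear_MDS_code_def by auto

lemma k_le: "k + 1 \<le> n"
proof -
  have "k \<le> n" using vec.dim_subset_UNIV[of C] kdim nN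
    by (simp add: vec.dimension_def card_cart_basis)
  then show ?thesis using dnk d2 by linarith
qed

lemma d_eq: "d - 1 = n - k" "d - 2 = n - k - 1" using dnk k_le d2 by auto

lemma weight_ge: assumes "c \<in> C" "c \<noteq> 0" shows "d \<le> hamming_weight c"
proof -
  have "hamming_weight c \<in> {hamming_weight c | c. c \<in> C \<and> c \<noteq> 0}" using assms by auto
  then show ?thesis unfolding dmin min_distance_def
    by (intro cInf_lower) (auto intro: bdd_belowI[of _ 0])
qed

lemma vanish_zero:
  assumes "c \<in> C" "card U = k" "\<forall>i\<in>U. c $ i = 0" shows "c = 0"
proof (rule ccontr)
  assume "c \<noteq> 0"
  then have "d \<le> hamming_weight c" using weight_ge assms by auto
  moreover have "hamming_weight c \<le> card (- U)"
    unfolding hamming_weight_def using assms(3) by (intro card_mono) auto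
  moreover have "card (- U) = n - k" using assms(2) nN by (simp add: Compl_eq_Diff_UNIV card_Diff_subset)
  ultimately show False using d_eq d2 by linarith
qed

lemma inj_proj: assumes "card U = k" shows "inj_on (proj U) C"
proof
  fix x y assume xy: "x \<in> C" "y \<in> C" "proj U x = proj U y"
  have "x - y \<in> C" using xy subC by (simp add: vec.subspace_diff)
  moreover have "\<forall>i\<in>U. (x - y) $ i = 0" using xy(3) unfolding proj_def vec_eq_iff by (auto) (metis vec_lambda_beta)
  ultimately have "x - y = 0" using vanish_zero assms by blast
  then show "x = y" by simp
qed

lemma proj_onto: assumes "card U = k" shows "proj U ` C = Vsub U"
proof (rule vec.subspace_dim_equal)
  show "vec.subspace (proj U ` C)" by (rule vec.linear_subspace_image[OF linear_proj subC])
  show "vec.subspace (Vsub U)" by (rule subspace_Vsub)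
  show "proj U ` C \<subseteq> Vsub U" by (auto simp: proj_def Vsub_def)
  have "vec.dim (proj U ` C) = vec.dim C"
    using inj_proj[OF assms] subC by (intro vec.dim_image_eq[OF linear_proj]) (metis vec.span_eq_iff)
  then show "vec.dim (Vsub U) \<le> vec.dim (proj U ` C)"
    using dim_Vsub_le[of U] assms kdim by simp
qed

lemma dual_zeros:
  assumes x: "x \<in> dual_code C" "x \<noteq> 0" shows "card {i. x $ i = 0} \<le> d - 2"
proof (rule ccontr)
  assume "\<not> ?thesis"
  then have "d - 1 \<le> card {i. x $ i = 0}" by linarith
  then obtain Z' where Z': "Z' \<subseteq> {i. x $ i = 0}" "card Z' = d - 1"
    using obtain_subset_with_card_n by blast
  define U where "U = - Z'"
  have cU: "card U = k" unfolding U_def using Z'(2) nN d_eq k_le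
    by (simp add: Compl_eq_Diff_UNIV card_Diff_subset)
  obtain j where j: "x $ j \<noteq> 0" using x(2) by (auto simp: vec_eq_iff)
  then have jU: "j \<in> U" using Z' unfolding U_def by auto
  have "axis j 1 \<in> Vsub U" using jU by (auto simp: Vsub_def axis_def)
  then obtain c where c: "c \<in> C" "proj U c = axis j 1" using proj_onto[OF cU] by force
  have "0 = (\<Sum>i\<in>UNIV. x $ i * c $ i)" using x(1) c(1) unfolding dual_code_def by auto
  also have "\<dots> = (\<Sum>i\<in>UNIV. x $ i * (proj U c) $ i)"
    using Z' by (intro sum.cong) (auto simp: proj_def U_def)
  also have "\<dots> = x $ j" using c(2) by (simp add: axis_def if_distrib[of "\<lambda>t. _ * t"] cong: if_cong)
  finally show False using j by simp
qed

lemma exists_h: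
  assumes T: "card T = d - 2" shows "\<exists>x \<in> dual_code C. x \<noteq> 0 \<and> (\<forall>i\<in>T. x $ i = 0)"
proof -
  have "card (- T) = k + 1" using T nN d_eq k_le
    by (simp add: Compl_eq_Diff_UNIV card_Diff_subset)
  then obtain u0 where u0: "u0 \<in> - T" by (metis card.empty ex_in_conv add_is_0 one_neq_zero)
  define U where "U = - T - {u0}"
  have cU: "card U = k" unfolding U_def using u0 \<open>card (- T) = k + 1\<close> by simp
  have "\<exists>c. c \<in> C \<and> proj U c = axis i 1" if "i \<in> U" for i
  proof -
    have "axis i 1 \<in> Vsub U" using that by (auto simp: Vsub_def axis_def)
    then show ?thesis using proj_onto[OF cU] by force
  qed
  then obtain cc where cc: "\<And>i. i \<in> U \<Longrightarrow> cc i \<in> C \<and> proj U (cc i) = axis i 1" by metis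
  have cc_comp: "cc i $ j = (if i = j then 1 else 0)" if "i \<in> U" "j \<in> U" for i j
  proof -
    have "cc i $ j = proj U (cc i) $ j" using that by (simp add: proj_def)
    then show ?thesis using cc[OF that(1)] by (simp add: axis_def)
  qed
  define x :: "'a^'n" where "x = (\<chi> j. if j = u0 then 1 else if j \<in> U then - (cc j $ u0) else 0)"
  have "x \<noteq> 0" by (auto simp: x_def vec_eq_iff intro!: exI[of _ u0])
  moreover have "\<forall>i\<in>T. x $ i = 0" using u0 by (auto simp: x_def U_def)
  moreover have "x \<in> dual_code C"
    unfolding dual_code_def
  proof (intro CollectI ballI)
    fix c assume c: "c \<in> C"
    define c' where "c' = (\<Sum>i\<in>U. c $ i *s cc i)"
    have c'C: "c' \<in> C" unfolding c'_def
      using subC cc by (intro vec.subspace_sum vec.subspace_scale) auto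
    have "proj U c' = proj U c"
    proof -
      have "c' $ j = c $ j" if "j \<in> U" for j
      proof -
        have "c' $ j = (\<Sum>i\<in>U. c $ i * cc i $ j)" by (simp add: c'_def sum_component)
        also have "\<dots> = (\<Sum>i\<in>U. if i = j then c $ i else 0)"
          using that cc_comp by (intro sum.cong) auto
        also have "\<dots> = c $ j" using that by (simp add: sum.delta finite_subset)
        finally show ?thesis .
      qed
      then show ?thesis by (auto simp: proj_def vec_eq_iff)
    qed
    then have "c' = c" using inj_proj[OF cU] c'C c by (auto dest: inj_onD)
    have u0U: "u0 \<notin> U" by (simp add: U_def)
    have "(\<Sum>i\<in>UNIV. x $ i * c $ i) = (\<Sum>i\<in>insert u0 U. x $ i * c $ i)"
      by (intro sum.mono_neutral_right) (auto simp: x_def)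
    also have "\<dots> = c $ u0 + (\<Sum>i\<in>U. - (cc i $ u0) * c $ i)"
      using u0U by (subst sum.insert) (auto simp: x_def intro!: sum.cong)
    also have "c $ u0 = c' $ u0" using \<open>c' = c\<close> by simp
    also have "\<dots> = (\<Sum>i\<in>U. c $ i * cc i $ u0)" by (simp add: c'_def sum_component)
    finally show "(\<Sum>i\<in>UNIV. x $ i * c $ i) = 0"
      by (simp add: sum_negf mult.commute)
  qed
  ultimately show ?thesis by blast
qed

lemma extend_T:
  fixes j :: 'n
  assumes "j \<notin> Z" "card Z \<le> d - 2" shows "\<exists>T. Z \<subseteq> T \<and> j \<notin> T \<and> card T = d - 2"
proof -
  have "card (- {j}) = n - 1" using nN by (simp add: Compl_eq_Diff_UNIV card_Diff_subset)
  then have "d - 2 \<le> card (- {j})" using d_eq k_le by linarith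
  then show ?thesis using extend_set[of "- {j}" Z "d - 2"] assms by auto
qed

definition hT :: "'n set \<Rightarrow> 'a^'n" where
  "hT T = (SOME x. x \<in> dual_code C \<and> x \<noteq> 0 \<and> (\<forall>i\<in>T. x $ i = 0))"

lemma hT_prop: assumes "card T = d - 2"
  shows "hT T \<in> dual_code C" "hT T \<noteq> 0" "{i. hT T $ i = 0} = T"
proof -
  have h: "hT T \<in> dual_code C \<and> hT T \<noteq> 0 \<and> (\<forall>i\<in>T. hT T $ i = 0)"
  proof -
    have "\<exists>x. x \<in> dual_code C \<and> x \<noteq> 0 \<and> (\<forall>i\<in>T. x $ i = 0)"
      using exists_h[OF assms] by blast
    then show ?thesis unfolding hT_def by (rule someI_ex)
  qed
  then show "hT T \<in> dual_code C" "hT T \<noteq> 0" by auto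
  show "{i. hT T $ i = 0} = T"
    using h dual_zeros[of "hT T"] assms by (intro card_seteq[symmetric]) auto
qed

definition Hs :: "('a^'n) set" where "Hs = hT ` {T. card T = d - 2}"

lemma span_Hs: "vec.span Hs = dual_code C"
proof
  show "vec.span Hs \<subseteq> dual_code C"
    using hT_prop subspace_dual unfolding Hs_def by (intro vec.span_minimal) auto
  have "\<forall>x\<in>dual_code C. hamming_weight x = m \<longrightarrow> x \<in> vec.span Hs" for m
  proof (induction m rule: less_induct)
    case (less m)
    show ?case
    proof (intro ballI impI)
      fix x assume x: "x \<in> dual_code C" "hamming_weight x = m"
      show "x \<in> vec.span Hs"
      proof (cases "x = 0")
        case True then show ?thesis by (simp add: vec.span_zero)
      next
        case False
        define Z where "Z = {i. x $ i = 0}"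
        have cZ: "card Z \<le> d - 2" using dual_zeros x False unfolding Z_def by auto
        obtain j where j: "x $ j \<noteq> 0" using False by (auto simp: vec_eq_iff)
        then have "j \<notin> Z" by (simp add: Z_def)
        then obtain T where T: "Z \<subseteq> T" "j \<notin> T" "card T = d - 2" using extend_T cZ by blast
        define h where "h = hT T"
        have h: "h \<in> dual_code C" "{i. h $ i = 0} = T" "h \<in> Hs"
          using hT_prop[OF T(3)] T(3) unfolding h_def Hs_def by auto
        have hj: "h $ j \<noteq> 0" using h(2) T(2) by auto
        define y where "y = x - (x $ j / h $ j) *s h"
        have yD: "y \<in> dual_code C" unfolding y_def
          using x(1) h(1) subspace_dual by (intro vec.subspace_diff vec.subspace_scale) auto
        have sub: "{i. y $ i \<noteq> 0} \<subset> {i. x $ i \<noteq> 0}"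
        proof -
          have "y $ i = 0" if "x $ i = 0" for i
          proof -
            have "i \<in> T" using that T(1) by (auto simp: Z_def)
            then have "h $ i = 0" using h(2) by auto
            then show ?thesis using that by (simp add: y_def)
          qed
          moreover have "y $ j = 0" using hj by (simp add: y_def)
          ultimately show ?thesis using j by auto
        qed
        then have "hamming_weight y < m" using x(2) unfolding hamming_weight_def
          by (metis finite psubset_card_mono)
        then have "y \<in> vec.span Hs" using less yD by blast
        moreover have "x = y + (x $ j / h $ j) *s h" by (simp add: y_def)
        ultimately show ?thesis using h(3)
          by (metis vec.span_add vec.span_base vec.span_scale)
      qed
    qed
  qed
  then show "dual_code C \<subseteq> vec.span Hs" by blast
qed

lemma SP_Hs: assumes "set H = Hs" shows "SP H d"
  unfolding SP_def
proof (intro allI impI)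
  fix S :: "'n set" assume S: "S \<noteq> {} \<and> card S \<le> d - 1"
  then obtain j where j: "j \<in> S" by blast
  have "card (S - {j}) \<le> d - 2" proof -
    have "card (S - {j}) = card S - 1" using j by (simp add: card_Diff_singleton)
    then show ?thesis using S d2 by linarith
  qed
  then obtain T where T: "S - {j} \<subseteq> T" "j \<notin> T" "card T = d - 2"
    using extend_T[of j "S - {j}"] by auto
  have h: "{i. hT T $ i = 0} = T" "hT T \<in> set H"
    using hT_prop[OF T(3)] T(3) assms unfolding Hs_def by auto
  have "{i\<in>S. hT T $ i \<noteq> 0} = {j}" using h(1) T j by auto
  then show "\<exists>h\<in>set H. card {i\<in>S. h $ i \<noteq> 0} = 1" using h(2) by (intro bexI[of _ "hT T"]) auto
qed

lemma not_SP: assumes "k \<ge> 1" "set H \<subseteq> dual_code C" shows "\<not> SP H (d + 1)"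
proof
  assume sp: "SP H (d + 1)"
  have "\<not> C \<subseteq> {0}"
  proof
    assume "C \<subseteq> {0}"
    then have "vec.dim C = 0" by (simp only: vec.dim_eq_0)
    then show False using assms(1) kdim by linarith
  qed
  then have ne: "{hamming_weight c | c. c \<in> C \<and> c \<noteq> 0} \<noteq> {}" by auto
  obtain c where c: "c \<in> C" "c \<noteq> 0" "hamming_weight c = d"
    using Inf_nat_def1[OF ne] unfolding dmin min_distance_def by auto
  define S where "S = {i. c $ i \<noteq> 0}"
  have "S \<noteq> {}" using c(2) by (auto simp: S_def vec_eq_iff)
  moreover have "card S \<le> d + 1 - 1" using c(3) by (simp add: S_def hamming_weight_def)
  ultimately obtain h where h: "h \<in> set H" "card {i\<in>S. h $ i \<noteq> 0} = 1"
    using sp unfolding SP_def by blast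
  then obtain j where j: "{i\<in>S. h $ i \<noteq> 0} = {j}" by (auto simp: card_1_singleton_iff)
  have "0 = (\<Sum>i\<in>UNIV. h $ i * c $ i)" using h(1) assms(2) c(1) unfolding dual_code_def by auto
  also have "\<dots> = (\<Sum>i\<in>{j}. h $ i * c $ i)"
    using j by (intro sum.mono_neutral_right) (auto simp: S_def)
  also have "\<dots> \<noteq> 0" using j by (auto simp: S_def)
  finally show False by simp
qed

lemma sd_Hs: assumes "set H = Hs" shows "stopping_distance H = d"
proof (cases "k = 0")
  case True
  then have "C \<subseteq> {0}" using kdim by (simp only: vec.dim_eq_0)
  then have E: "{hamming_weight c | c. c \<in> C \<and> c \<noteq> 0} = {}" by auto
  have "min_distance C = Inf ({}::nat set)" unfolding min_distance_def E ..
  then have dth: "d = (THE x::nat. False)" using dmin by (simp add: inf_empty)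
  have "SP H s" for s
    unfolding SP_def
  proof (intro allI impI)
    fix S :: "'n set" assume "S \<noteq> {} \<and> card S \<le> s - 1"
    moreover have "card S \<le> n" using nN by (simp add: card_mono)
    ultimately show "\<exists>h\<in>set H. card {i\<in>S. h $ i \<noteq> 0} = 1"
      using SP_Hs[OF assms] True dnk unfolding SP_def by auto
  qed
  then show ?thesis using sd_all dth by metis
next
  case False
  have "set H \<subseteq> dual_code C" using assms span_Hs vec.span_superset by blast
  then show ?thesis using sd_eq SP_Hs[OF assms] not_SP False by auto
qed

lemma count_bound:
  assumes span: "vec.span (set H) = dual_code C" and sp: "SP H d"
  shows "n choose (d - 1) \<le> length H * (k + 1)"
proof -
  define F where "F h = {S::'n set. card S = d - 1 \<and> card {i\<in>S. h $ i \<noteq> 0} = 1}" for h :: "'a^'n"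
  have HD: "set H \<subseteq> dual_code C" using span vec.span_superset by blast
  have A: "{S::'n set. card S = d - 1} \<subseteq> (\<Union>h\<in>set H. F h)"
  proof
    fix S :: "'n set" assume "S \<in> {S. card S = d - 1}"
    then have "card S = d - 1" by simp
    then have "S \<noteq> {} \<and> card S \<le> d - 1" using d2 by auto
    then obtain h where "h \<in> set H" "card {i\<in>S. h $ i \<noteq> 0} = 1"
      using sp unfolding SP_def by blast
    then show "S \<in> (\<Union>h\<in>set H. F h)" using \<open>card S = d - 1\<close> unfolding F_def by auto
  qed
  have Fb: "card (F h) \<le> k + 1" if hH: "h \<in> set H" for h
  proof (cases "F h = {}")
    case True then show ?thesis by simp
  next
    case False
    then obtain S0 where "S0 \<in> F h" by blast
    define Z where "Z = {i. h $ i = 0}"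
    have key: "\<exists>j. j \<notin> Z \<and> S = insert j Z" "card Z = d - 2" if S: "S \<in> F h" for S
    proof -
      obtain j where j: "{i\<in>S. h $ i \<noteq> 0} = {j}" using S unfolding F_def
        by (auto simp: card_1_singleton_iff)
      have hne: "h \<noteq> 0" using j by auto
      have cZ: "card Z \<le> d - 2" using dual_zeros[of h] hH HD hne unfolding Z_def by auto
      have sub: "S - {j} \<subseteq> Z" using j unfolding Z_def by auto
      have jS: "j \<in> S" using j by auto
      have "card (S - {j}) = card S - 1" using jS by (simp add: card_Diff_singleton)
      then have cS: "card (S - {j}) = d - 2" using S d2 unfolding F_def by auto
      have "S - {j} = Z" using sub cZ cS by (intro card_seteq) auto
      moreover have "j \<in> S" "j \<notin> Z" using j unfolding Z_def by auto
      ultimately show "\<exists>j. j \<notin> Z \<and> S = insert j Z" "card Z = d - 2" using cS by auto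
    qed
    have "F h \<subseteq> (\<lambda>j. insert j Z) ` (- Z)" using key(1) by blast
    then have "card (F h) \<le> card (- Z)" by (metis card_image_le finite surj_card_le)
    also have "card (- Z) = n - card Z" using nN by (simp add: Compl_eq_Diff_UNIV card_Diff_subset)
    also have "\<dots> = k + 1" using key(2)[OF \<open>S0 \<in> F h\<close>] d_eq k_le by simp
    finally show ?thesis .
  qed
  have "n choose (d - 1) = card {S::'n set. card S = d - 1}"
    using n_subsets[of "UNIV :: 'n set" "d - 1"] nN by simp
  also have "\<dots> \<le> card (\<Union>h\<in>set H. F h)" using A by (intro card_mono) auto
  also have "\<dots> \<le> (\<Sum>h\<in>set H. card (F h))" by (rule card_UN_le) simp
  also have "\<dots> \<le> (\<Sum>h\<in>set H. k + 1)" using Fb by (intro sum_mono) auto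
  also have "\<dots> = card (set H) * (k + 1)" by simp
  also have "\<dots> \<le> length H * (k + 1)" by (rule mult_le_mono1[OF card_length])
  finally show ?thesis .
qed

lemma exists_H0: "\<exists>H. length H = n choose (d - 2) \<and> is_parity_check_matrix C H \<and> stopping_distance H = d"
proof -
  have "finite {T::'n set. card T = d - 2}" by (rule finite)
  then obtain L where L: "set L = {T::'n set. card T = d - 2}" "distinct L"
    using finite_distinct_list by blast
  define H where "H = map hT L"
  have sH: "set H = Hs" unfolding H_def Hs_def using L by simp
  have "length H = card (set L)" using L(2) by (simp add: H_def distinct_card)
  also have "\<dots> = n choose (d - 2)" using L(1) n_subsets[of "UNIV :: 'n set" "d - 2"] nN by simp
  finally have "length H = n choose (d - 2)" .
  moreover have "is_parity_check_matrix C H" unfolding is_parity_check_matrix_def sH span_Hs ..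
  moreover have "stopping_distance H = d" using sd_Hs[OF sH] .
  ultimately show ?thesis by blast
qed

lemma lower_H:
  assumes "is_parity_check_matrix C H" "stopping_distance H = d"
  shows "n choose (d - 2) \<le> length H * (d - 1)"
proof -
  have "SP H d" using SP_sd[of H] unfolding assms(2) .
  then have cb: "n choose (d - 1) \<le> length H * (k + 1)"
    using count_bound assms(1) unfolding is_parity_check_matrix_def by blast
  define m where "m = d - 2"
  have dm1: "d - 1 = Suc m" using d2 unfolding m_def by arith
  have dm2: "k + 1 = n - m" using d_eq(2) k_le unfolding m_def by arith
  note dm = dm1 dm2
  have "n choose Suc m \<le> length H * (n - m)" using cb unfolding dm1 dm2 .
  moreover have "m < n" using dm2 by linarith
  ultimately have "n choose m \<le> length H * Suc m" by (rule arith_aux)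
  then show ?thesis using dm1 unfolding m_def by metis
qed

end

theorem theorem16:
  fixes C :: "(('a::{finite,field})^'n) set" and n k d :: nat
  assumes "is_linear_MDS_code C n k d" and "d \<ge> 2"
  shows "real (n choose (d - 2)) / real (d - 1) \<le> real (stopping_redundancy C)
    \<and> stopping_redundancy C \<le> n choose (d - 2)"
proof -
  have dmin: "d = min_distance C" using assms(1) unfolding is_linear_MDS_code_def by auto
  obtain H0 where H0: "length H0 = n choose (d - 2)" "is_parity_check_matrix C H0"
    "stopping_distance H0 = d" using exists_H0[OF assms] by blast
  let ?P = "\<lambda>r. \<exists>H. length H = r \<and> is_parity_check_matrix C H \<and> stopping_distance H = min_distance C"
  have P0: "?P (n choose (d - 2))" using H0 dmin by blast
  then have up: "stopping_redundancy C \<le> n choose (d - 2)"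
    unfolding stopping_redundancy_def by (rule Least_le)
  have "?P (stopping_redundancy C)"
    unfolding stopping_redundancy_def using P0 by (rule LeastI)
  then obtain H where H: "length H = stopping_redundancy C" "is_parity_check_matrix C H"
    "stopping_distance H = d" using dmin by blast
  have "n choose (d - 2) \<le> stopping_redundancy C * (d - 1)"
    using lower_H[OF assms H(2,3)] H(1) by simp
  then have "real (n choose (d - 2)) \<le> real (stopping_redundancy C) * real (d - 1)"
    by (metis of_nat_le_iff of_nat_mult)
  moreover have "real (d - 1) > 0" using assms(2) by simp
  ultimately have "real (n choose (d - 2)) / real (d - 1) \<le> real (stopping_redundancy C)"
    by (simp add: divide_le_eq)
  then show ?thesis using up by simp
qed

end
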